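(* Let $G$ be a graph with $n$ vertices. If $\mathrm{Deg}\,H(G,x)\ge n$, then $G$ contains a triangle (i.e. its girth is $3$). Furthermore, if $G$ is triangle-free and $\mathrm{Deg}\,H(G,x)=n-1$, then $G$ is connected and has diameter at most $3$.
   Context: All graphs are finite, simple and have no isolated vertices; $d_u$ is the degree of $u$. The harmonic polynomial is $H(G,x)=\sum_{uv\in E(G)}x^{d_u+d_v-1}$, and $\mathrm{Deg}\,p(x)$ denotes the degree of a polynomial $p$. The girth is the minimum length of a cycle. *)

theory Defs
  imports Main "HOL-Computational_Algebra.Polynomial"
begin

definition simple_graph :: "'a set \<Rightarrow> ('a \<Rightarrow> 'a \<Rightarrow> bool) \<Rightarrow> bool" where
  "simple_graph V E \<longleftrightarrow> finite V \<and> V \<noteq> {}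
     \<and> (\<forall>u v. E u v \<longrightarrow> u \<in> V \<and> v \<in> V)
     \<and> (\<forall>u v. E u v \<longrightarrow> E v u)
     \<and> (\<forall>u. \<not> E u u)
     \<and> (\<forall>v\<in>V. \<exists>u. E v u)"

definition vdeg :: "('a \<Rightarrow> 'a \<Rightarrow> bool) \<Rightarrow> 'a \<Rightarrow> nat" where
  "vdeg E v = card {u. E v u}"

definition edges :: "('a \<Rightarrow> 'a \<Rightarrow> bool) \<Rightarrow> 'a set set" where
  "edges E = {{u, v} | u v. E u v}"

definition harmonic_poly :: "('a \<Rightarrow> 'a \<Rightarrow> bool) \<Rightarrow> int poly" where
  "harmonic_poly E = (\<Sum>e\<in>edges E. monom 1 ((\<Sum>w\<in>e. vdeg E w) - 1))"

definition has_triangle :: "('a \<Rightarrow> 'a \<Rightarrow> bool) \<Rightarrow> bool" where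
  "has_triangle E \<longleftrightarrow> (\<exists>a b c. E a b \<and> E b c \<and> E a c)"

definition connected_graph :: "'a set \<Rightarrow> ('a \<Rightarrow> 'a \<Rightarrow> bool) \<Rightarrow> bool" where
  "connected_graph V E \<longleftrightarrow> (\<forall>u\<in>V. \<forall>v\<in>V. E\<^sup>*\<^sup>* u v)"

text \<open>Distance: length of a shortest walk (= shortest path).\<close>
definition gdist :: "('a \<Rightarrow> 'a \<Rightarrow> bool) \<Rightarrow> 'a \<Rightarrow> 'a \<Rightarrow> nat" where
  "gdist E u v = (LEAST k. (E ^^ k) u v)"

definition diameter :: "'a set \<Rightarrow> ('a \<Rightarrow> 'a \<Rightarrow> bool) \<Rightarrow> nat" where
  "diameter V E = Max {gdist E u v | u v. u \<in> V \<and> v \<in> V}"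

end

theory Submission
  imports Defs
begin

lemma path2: "E a b \<Longrightarrow> E b c \<Longrightarrow> (E ^^ 2) a c"
proof -
  assume "E a b" "E b c"
  hence "(E ^^ Suc 0) a b" by (simp only: relpowp_1 One_nat_def[symmetric])
  hence "(E ^^ Suc (Suc 0)) a c" using \<open>E b c\<close> by (rule relpowp_Suc_I)
  thus ?thesis by (simp add: numeral_2_eq_2)
qed

lemma path3: "E a b \<Longrightarrow> E b c \<Longrightarrow> E c d \<Longrightarrow> (E ^^ 3) a d"
proof -
  assume "E a b" "E b c" "E c d"
  from \<open>E a b\<close> \<open>E b c\<close> have "(E ^^ 2) a c" by (rule path2)
  hence "(E ^^ Suc 2) a d" using \<open>E c d\<close> by (rule relpowp_Suc_I)
  thus ?thesis by (simp add: numeral_3_eq_3)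
qed

lemma nbr_sum_le:
  assumes G: "simple_graph V E" and nt: "\<not> has_triangle E" and uv: "E u v"
  shows "vdeg E u + vdeg E v = card ({w. E u w} \<union> {w. E v w})"
    and "{w. E u w} \<union> {w. E v w} \<subseteq> V"
proof -
  have fin: "finite V" using G by (simp add: simple_graph_def)
  have sub: "{w. E u w} \<subseteq> V" "{w. E v w} \<subseteq> V" using G by (auto simp: simple_graph_def)
  have dis: "{w. E u w} \<inter> {w. E v w} = {}" using nt uv by (auto simp: has_triangle_def)
  show "vdeg E u + vdeg E v = card ({w. E u w} \<union> {w. E v w})"
    unfolding vdeg_def using card_Un_disjoint[OF finite_subset[OF sub(1) fin] finite_subset[OF sub(2) fin] dis]
    by simp
  show "{w. E u w} \<union> {w. E v w} \<subseteq> V" using sub by auto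
qed

lemma edge_sum:
  assumes G: "simple_graph V E" and e: "e \<in> edges E"
  obtains u v where "E u v" "e = {u,v}" "(\<Sum>w\<in>e. vdeg E w) = vdeg E u + vdeg E v"
proof -
  from e obtain u v where uv: "E u v" "e = {u,v}" by (auto simp: edges_def)
  have "u \<noteq> v" using uv G by (auto simp: simple_graph_def)
  thus ?thesis using that uv by auto
qed

lemma fin_edges:
  assumes G: "simple_graph V E" shows "finite (edges E)"
proof -
  have "edges E \<subseteq> Pow V" using G by (auto simp: edges_def simple_graph_def)
  moreover have "finite V" using G by (simp add: simple_graph_def)
  ultimately show ?thesis by (meson finite_Pow_iff finite_subset)
qed

theorem theorem11:
  fixes V :: "'a set" and E :: "'a \<Rightarrow> 'a \<Rightarrow> bool"
  assumes "simple_graph V E"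
  shows "(degree (harmonic_poly E) \<ge> card V \<longrightarrow> has_triangle E)
       \<and> (\<not> has_triangle E \<and> degree (harmonic_poly E) = card V - 1
            \<longrightarrow> connected_graph V E \<and> diameter V E \<le> 3)"
proof -
  note G = assms
  have fin: "finite V" and ne: "V \<noteq> {}" using G by (auto simp: simple_graph_def)
  have cV: "card V \<ge> 2"
  proof -
    obtain x where x: "x \<in> V" using ne by auto
    have "\<forall>v\<in>V. \<exists>u. E v u" using G by (simp add: simple_graph_def)
    then obtain y where "E x y" using x by blast
    hence "x \<noteq> y" "y \<in> V" using G by (auto simp: simple_graph_def)
    hence "card {x,y} \<le> card V" using x fin by (intro card_mono) auto
    thus ?thesis using \<open>x \<noteq> y\<close> by simp
  qed
  have part1: "\<not> has_triangle E \<Longrightarrow> degree (harmonic_poly E) \<le> card V - 1"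
  proof -
    assume nt: "\<not> has_triangle E"
    show ?thesis unfolding harmonic_poly_def
    proof (rule degree_sum_le[OF fin_edges[OF G]])
      fix e assume e: "e \<in> edges E"
      then obtain u v where uv: "E u v" "(\<Sum>w\<in>e. vdeg E w) = vdeg E u + vdeg E v"
        using edge_sum[OF G e] by blast
      have "vdeg E u + vdeg E v \<le> card V"
        using nbr_sum_le(1)[OF G nt uv(1)] card_mono[OF fin nbr_sum_le(2)[OF G nt uv(1)]] by simp
      thus "degree (monom (1::int) ((\<Sum>w\<in>e. vdeg E w) - 1)) \<le> card V - 1"
        using uv(2) degree_monom_le[of "1::int" "(\<Sum>w\<in>e. vdeg E w) - 1"] by linarith
    qed
  qed
  show ?thesis
  proof (intro conjI impI)
    assume "card V \<le> degree (harmonic_poly E)"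
    thus "has_triangle E"
    proof (rule contrapos_pp)
      assume "\<not> has_triangle E"
      from part1[OF this] cV show "\<not> card V \<le> degree (harmonic_poly E)" by linarith
    qed
  next
    assume h: "\<not> has_triangle E \<and> degree (harmonic_poly E) = card V - 1"
    hence nt: "\<not> has_triangle E" by simp
    have "harmonic_poly E \<noteq> 0" using h cV by auto
    hence "coeff (harmonic_poly E) (degree (harmonic_poly E)) \<noteq> 0" by simp
    hence "coeff (harmonic_poly E) (card V - 1) \<noteq> 0" using h by simp
    hence "(\<Sum>e\<in>edges E. coeff (monom (1::int) ((\<Sum>w\<in>e. vdeg E w) - 1)) (card V - 1)) \<noteq> 0"
      by (simp add: harmonic_poly_def coeff_sum)
    hence "\<exists>e\<in>edges E. coeff (monom (1::int) ((\<Sum>w\<in>e. vdeg E w) - 1)) (card V - 1) \<noteq> 0"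
    proof (rule contrapos_np)
      assume "\<not> (\<exists>e\<in>edges E. coeff (monom (1::int) ((\<Sum>w\<in>e. vdeg E w) - 1)) (card V - 1) \<noteq> 0)"
      hence "\<forall>e\<in>edges E. coeff (monom (1::int) ((\<Sum>w\<in>e. vdeg E w) - 1)) (card V - 1) = 0" by simp
      thus "(\<Sum>e\<in>edges E. coeff (monom (1::int) ((\<Sum>w\<in>e. vdeg E w) - 1)) (card V - 1)) = 0"
        by (rule sum.neutral)
    qed
    then obtain e where e: "e \<in> edges E" and "coeff (monom (1::int) ((\<Sum>w\<in>e. vdeg E w) - 1)) (card V - 1) \<noteq> 0"
      by blast
    hence eq: "(\<Sum>w\<in>e. vdeg E w) - 1 = card V - 1" by (auto simp: coeff_monom split: if_splits)
    obtain u v where uv: "E u v" "(\<Sum>w\<in>e. vdeg E w) = vdeg E u + vdeg E v"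
      using edge_sum[OF G e] by blast
    have "vdeg E u \<ge> 1"
    proof -
      have "{w. E u w} \<subseteq> V" using G by (auto simp: simple_graph_def)
      hence "finite {w. E u w}" using fin by (rule finite_subset)
      moreover have "v \<in> {w. E u w}" using uv by simp
      ultimately have "card {w. E u w} > 0" by (auto simp: card_gt_0_iff)
      thus ?thesis unfolding vdeg_def by simp
    qed
    hence s: "vdeg E u + vdeg E v = card V" using eq uv cV by linarith
    have cover: "{w. E u w} \<union> {w. E v w} = V"
      using card_subset_eq[OF fin nbr_sum_le(2)[OF G nt uv(1)]] nbr_sum_le(1)[OF G nt uv(1)] s by simp
    have sym: "\<And>a b. E a b \<Longrightarrow> E b a" using G by (simp add: simple_graph_def)
    have reach: "\<exists>k\<le>3. (E ^^ k) w w'" if w: "w \<in> V" and w': "w' \<in> V" for w w'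
    proof -
      have a: "E u w \<or> E v w" and b: "E u w' \<or> E v w'" using w w' cover by auto
      show ?thesis
      proof (cases "E u w")
        case True
        show ?thesis
        proof (cases "E u w'")
          case True2: True
          have "(E ^^ 2) w w'" using path2[where E=E, OF sym[OF True] True2] .
          thus ?thesis by (intro exI[of _ 2]) auto
        next
          case False
          hence "E v w'" using b by simp
          have "(E ^^ 3) w w'" using path3[where E=E, OF sym[OF True] uv(1) \<open>E v w'\<close>] .
          thus ?thesis by (intro exI[of _ 3]) auto
        qed
      next
        case False
        hence Ev: "E v w" using a by simp
        show ?thesis
        proof (cases "E v w'")
          case True2: True
          have "(E ^^ 2) w w'" using path2[where E=E, OF sym[OF Ev] True2] .
          thus ?thesis by (intro exI[of _ 2]) auto
        next
          case False
          hence "E u w'" using b by simp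
          have "(E ^^ 3) w w'" using path3[where E=E, OF sym[OF Ev] sym[OF uv(1)] \<open>E u w'\<close>] .
          thus ?thesis by (intro exI[of _ 3]) auto
        qed
      qed
    qed
    show "connected_graph V E" unfolding connected_graph_def
    proof (intro ballI)
      fix a b assume "a \<in> V" "b \<in> V"
      then obtain k where "(E ^^ k) a b" using reach by blast
      thus "E\<^sup>*\<^sup>* a b" by (rule relpowp_imp_rtranclp)
    qed
    have fS: "finite {gdist E u v | u v. u \<in> V \<and> v \<in> V}"
    proof -
      have "{gdist E u v | u v. u \<in> V \<and> v \<in> V} = (\<lambda>(a,b). gdist E a b) ` (V \<times> V)" by auto
      thus ?thesis using fin by simp
    qed
    have neS: "{gdist E u v | u v. u \<in> V \<and> v \<in> V} \<noteq> {}" using ne by auto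
    show "diameter V E \<le> 3" unfolding diameter_def
    proof (subst Max_le_iff[OF fS neS], safe)
      fix a b assume "a \<in> V" "b \<in> V"
      then obtain k where "k \<le> 3" "(E ^^ k) a b" using reach by blast
      hence "(LEAST k. (E ^^ k) a b) \<le> k" by (intro Least_le)
      thus "gdist E a b \<le> 3" unfolding gdist_def using \<open>k \<le> 3\<close> by linarith
    qed
  qed
qed

end
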